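(* Let $k\ge1$ be an integer and $\rho\in(0,1)$. For every $C\in\big[1,\tfrac{2+\rho^k}{2-\rho^k}\big]$, $$\tilde\rho(C)=\frac{C+1}{2}\rho^k-\frac{C-1}{2}.$$
   Context: $\mathbb{R}_k[X]$ denotes real polynomials of degree at most $k$, and $\|p\|_1$ is the sum of absolute values of the coefficients of $p$. For $C\ge1$, $\tilde\rho(C)=\min\{\max_{x\in[0,\rho]}|p(x)| : p\in\mathbb{R}_k[X],\ p(1)=1,\ \|p\|_1\le C\}$. *)

theory Defs
  imports "HOL-Analysis.Analysis" "HOL-Computational_Algebra.Polynomial"
begin

definition l1_norm :: "real poly \<Rightarrow> real" where
  "l1_norm p = (\<Sum>i\<le>degree p. \<bar>coeff p i\<bar>)"

text \<open>max over [0, rho] of |p(x)| (a maximum of a continuous function on a compact interval).\<close>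
definition sup_on :: "real \<Rightarrow> real poly \<Rightarrow> real" where
  "sup_on \<rho> p = (SUP x\<in>{0..\<rho>}. \<bar>poly p x\<bar>)"

definition tilde_rho_set :: "nat \<Rightarrow> real \<Rightarrow> real \<Rightarrow> real set" where
  "tilde_rho_set k \<rho> C =
     {sup_on \<rho> p | p. degree p \<le> k \<and> poly p 1 = 1 \<and> l1_norm p \<le> C}"

definition is_min_of :: "real set \<Rightarrow> real \<Rightarrow> bool" where
  "is_min_of S v \<longleftrightarrow> v \<in> S \<and> (\<forall>y\<in>S. v \<le> y)"

end

theory Submission
  imports Defs
begin

lemma l1_norm_le:
  assumes "degree p \<le> n"
  shows "l1_norm p \<le> (\<Sum>i\<le>n. \<bar>coeff p i\<bar>)"
  unfolding l1_norm_def
  by (rule sum_mono2) (use assms in auto)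

lemma sup_on_ge:
  assumes "0 \<le> \<rho>"
  shows "\<bar>poly p \<rho>\<bar> \<le> sup_on \<rho> p"
proof -
  have "compact ((\<lambda>x. \<bar>poly p x\<bar>) ` {0..\<rho>})"
    by (rule compact_continuous_image) (auto intro!: continuous_intros)
  hence "bdd_above ((\<lambda>x. \<bar>poly p x\<bar>) ` {0..\<rho>})"
    by (simp add: bounded_imp_bdd_above compact_imp_bounded)
  thus ?thesis unfolding sup_on_def
    by (rule cSUP_upper[rotated]) (use assms in auto)
qed

lemma lower:
  fixes p :: "real poly"
  assumes "0 < \<rho>" "\<rho> < 1" "degree p \<le> k" "poly p 1 = 1" "l1_norm p \<le> C"
  shows "(C + 1) / 2 * \<rho> ^ k - (C - 1) / 2 \<le> poly p \<rho>"
proof -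
  let ?r = "\<rho> ^ k"
  let ?S = "l1_norm p"
  have r1: "?r \<le> 1" using assms by (simp add: power_le_one)
  have hterm: "coeff p i * \<rho> ^ i \<ge> (coeff p i + \<bar>coeff p i\<bar>) / 2 * ?r - (\<bar>coeff p i\<bar> - coeff p i) / 2"
    if "i \<le> degree p" for i
  proof (cases "coeff p i \<ge> 0")
    case True
    have "\<rho> ^ k \<le> \<rho> ^ i" using that assms by (intro power_decreasing) auto
    then show ?thesis using True by (simp add: mult_left_mono)
  next
    case False
    have "\<rho> ^ i \<le> 1" using assms by (simp add: power_le_one)
    then have "coeff p i * \<rho> ^ i \<ge> coeff p i" using False
      by (metis mult.right_neutral mult_left_mono_neg not_le less_imp_le)
    then show ?thesis using False by simp
  qed
  have s1: "(\<Sum>i\<le>degree p. coeff p i) = 1"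
    using assms(4) by (simp add: poly_altdef)
  have "poly p \<rho> = (\<Sum>i\<le>degree p. coeff p i * \<rho> ^ i)" by (simp add: poly_altdef)
  also have "\<dots> \<ge> (\<Sum>i\<le>degree p. (coeff p i + \<bar>coeff p i\<bar>) / 2 * ?r - (\<bar>coeff p i\<bar> - coeff p i) / 2)"
    by (rule sum_mono) (use hterm in auto)
  finally have "poly p \<rho> \<ge> (1 + ?S) / 2 * ?r - (?S - 1) / 2"
    using s1 unfolding l1_norm_def
    by (simp add: sum_subtractf sum.distrib sum_divide_distrib[symmetric] sum_distrib_right[symmetric])
  moreover have "(1 + ?S) / 2 * ?r - (?S - 1) / 2 \<ge> (C + 1) / 2 * ?r - (C - 1) / 2"
  proof -
    have "(C - ?S) * (1 - ?r) \<ge> 0" using assms r1 by simp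
    moreover have "((1 + ?S) / 2 * ?r - (?S - 1) / 2) - ((C + 1) / 2 * ?r - (C - 1) / 2) = (C - ?S) * (1 - ?r) / 2"
      by (simp add: field_simps)
    ultimately show ?thesis by linarith
  qed
  ultimately show ?thesis by linarith
qed

theorem lemma2:
  fixes k :: nat and \<rho> C :: real
  assumes "k \<ge> 1" and "0 < \<rho>" and "\<rho> < 1"
    and "1 \<le> C" and "C \<le> (2 + \<rho> ^ k) / (2 - \<rho> ^ k)"
  shows "is_min_of (tilde_rho_set k \<rho> C) ((C + 1) / 2 * \<rho> ^ k - (C - 1) / 2)"
proof -
  define a where "a = (C + 1) / 2"
  define b where "b = (C - 1) / 2"
  define v where "v = (C + 1) / 2 * \<rho> ^ k - (C - 1) / 2"
  define p where "p = monom a k - [:b:]"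
  have r1: "\<rho> ^ k < 1" "0 < \<rho> ^ k" using assms by (auto simp: power_less_one_iff)
  have b0: "0 \<le> b" using assms by (simp add: b_def)
  have bv: "b \<le> v"
  proof -
    have "C * (2 - \<rho> ^ k) \<le> 2 + \<rho> ^ k" using assms(5) r1 by (simp add: pos_le_divide_eq)
    thus ?thesis by (simp add: b_def v_def algebra_simps)
  qed
  have pev: "poly p x = a * x ^ k - b" for x by (simp add: p_def poly_monom)
  have deg: "degree p \<le> k"
    unfolding p_def by (rule order.trans[OF degree_diff_le_max]) (auto simp: degree_monom_le)
  have p1: "poly p 1 = 1" by (simp add: pev a_def b_def field_simps)
  have "l1_norm p \<le> (\<Sum>i\<le>k. \<bar>coeff p i\<bar>)" by (rule l1_norm_le[OF deg])
  also have "\<dots> \<le> (\<Sum>i\<le>k. (if i = k then \<bar>a\<bar> else 0) + (if i = 0 then \<bar>b\<bar> else 0))"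
    by (rule sum_mono) (auto simp: p_def coeff_monom coeff_pCons abs_triangle_ineq4 split: nat.splits)
  also have "\<dots> = \<bar>a\<bar> + \<bar>b\<bar>" by (simp add: sum.distrib)
  also have "\<dots> = C" using assms b0 by (simp add: a_def b_def field_simps)
  finally have nrm: "l1_norm p \<le> C" .
  have sup: "sup_on \<rho> p = v"
    unfolding sup_on_def
  proof (rule cSup_eq_maximum)
    show "v \<in> (\<lambda>x. \<bar>poly p x\<bar>) ` {0..\<rho>}"
    proof -
      have "poly p \<rho> = v" by (simp add: pev a_def b_def v_def)
      hence "v = \<bar>poly p \<rho>\<bar>" using bv b0 by simp
      thus ?thesis using assms by (intro image_eqI[of _ _ \<rho>]) auto
    qed
    next
      fix y assume "y \<in> (\<lambda>x. \<bar>poly p x\<bar>) ` {0..\<rho>}"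
      then obtain x where x: "0 \<le> x" "x \<le> \<rho>" "y = \<bar>a * x ^ k - b\<bar>" by (auto simp: pev)
      have "x ^ k \<le> \<rho> ^ k" using x by (simp add: power_mono)
      hence "a * x ^ k \<le> a * \<rho> ^ k" using assms by (intro mult_left_mono) (auto simp: a_def)
      moreover have "0 \<le> a * x ^ k" using x assms by (simp add: a_def)
      moreover have "a * \<rho> ^ k - b = v" by (simp add: v_def a_def b_def)
      ultimately show "y \<le> v" using x bv b0 by (auto simp: abs_le_iff)
  qed
  have mem: "v \<in> tilde_rho_set k \<rho> C"
    unfolding tilde_rho_set_def using deg p1 nrm sup by auto
  show ?thesis unfolding is_min_of_def
  proof (intro conjI ballI)
    show "(C + 1) / 2 * \<rho> ^ k - (C - 1) / 2 \<in> tilde_rho_set k \<rho> C" using mem by (simp add: v_def)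
  next
    fix y assume "y \<in> tilde_rho_set k \<rho> C"
    then obtain q where q: "y = sup_on \<rho> q" "degree q \<le> k" "poly q 1 = 1" "l1_norm q \<le> C"
      by (auto simp: tilde_rho_set_def)
    have "(C + 1) / 2 * \<rho> ^ k - (C - 1) / 2 \<le> poly q \<rho>" using lower[OF assms(2,3) q(2-4)] .
    also have "\<dots> \<le> \<bar>poly q \<rho>\<bar>" by simp
    also have "\<dots> \<le> y" using sup_on_ge[of \<rho> q] assms q(1) by simp
    finally show "(C + 1) / 2 * \<rho> ^ k - (C - 1) / 2 \<le> y" .
  qed
qed

end
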